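(* Let $\theta$ be irrational and let $G=\mathbf R^2\times\mathbf T^2$ with multiplication $(s_1,t_1,z_1,w_1)(s_2,t_2,z_2,w_2)=(s_1+s_2,t_1+t_2,e^{is_1t_2}z_1z_2,e^{i\theta s_1t_2}w_1w_2)$, so that $G_{\mathrm{ab}}\cong\mathbf R^2$. Let $X=\{1/n:n\in\mathbf N\}\cup\{0\}\subset\mathbf R$, let $\lambda:X\to\mathbf Z+\theta\mathbf Z$ be continuous with $\lambda(0)=0$ and $\lambda(1/n)\ne0$ for all $n$, and define $v\in Z^2(\mathbf R^2,C(X,\mathbf T))$ by $v((s_1,t_1),(s_2,t_2))(x)=e^{i\lambda(x)s_1t_2}$. Then $v$ is not pointwise trivial, its inflation $u=\inf v\in Z^2(G,C(X,\mathbf T))$ is pointwise trivial, and the projection $p:\mathcal Z_u\to X$ is not open; consequently $u$ is not cohomologous to the inflation of any pointwise trivial cocycle on $G_{\mathrm{ab}}$.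
   Context: $C(X,\mathbf T)$ carries the compact-open topology, trivial module; cohomology is Moore's Borel cohomology. For $u\in Z^2(G,C(X,\mathbf T))$, $u(x)(s,t)=u(s,t)(x)$; pointwise trivial means each $u(x)$ is a coboundary. Inflation: $\inf v(s,t)=v(\dot s,\dot t)$ where $s\mapsto \dot s$ is the quotient $G\to G_{\mathrm{ab}}=G/\overline{[G,G]}$. $\mathcal Z_u=\{(f,x)\in C^1(G,\mathbf T)\times X:\partial f=u(x)\}$ where $C^1(G,\mathbf T)$ are Borel maps and $\partial f(s,t)=f(s)f(t)f(st)^{-1}$, with the topology in which $(f_n,x_n)\to(f,x)$ iff $f_n\to f$ pointwise and $x_n\to x$; $p(f,x)=x$. *)

theory Defs
  imports "HOL-Analysis.Analysis"
begin

text \<open>The circle group T is represented by the complex numbers of modulus 1.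
An element of C(X,T) is represented by a function real => complex, of which only
the restriction to X matters.\<close>

definition CXT :: "real set \<Rightarrow> (real \<Rightarrow> complex) set" where
  "CXT X = {f \<in> extensional X. continuous_on X f \<and> (\<forall>x\<in>X. cmod (f x) = 1)}"

text \<open>Open sets of the compact-open (= uniform, X compact) topology on C(X,T).\<close>
definition cxt_open :: "real set \<Rightarrow> (real \<Rightarrow> complex) set \<Rightarrow> bool" where
  "cxt_open X U \<longleftrightarrow> U \<subseteq> CXT X \<and>
     (\<forall>f\<in>U. \<exists>r>0. \<forall>g\<in>CXT X. (\<forall>x\<in>X. dist (f x) (g x) < r) \<longrightarrow> g \<in> U)"

definition CXT_M :: "real set \<Rightarrow> (real \<Rightarrow> complex) measure" where
  "CXT_M X = sigma (CXT X) (Collect (cxt_open X))"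

text \<open>A locally compact group is given by a measurable space M (its Borel structure,
space M = carrier) and a multiplication.\<close>

definition C1 :: "'g measure \<Rightarrow> ('g \<Rightarrow> complex) set" where
  "C1 M = {f. f \<in> borel_measurable M \<and> (\<forall>s\<in>space M. cmod (f s) = 1) \<and> f \<in> extensional (space M)}"

definition cobdry :: "('g \<Rightarrow> 'g \<Rightarrow> 'g) \<Rightarrow> ('g \<Rightarrow> complex) \<Rightarrow> 'g \<Rightarrow> 'g \<Rightarrow> complex" where
  "cobdry gmul f s t = f s * f t * inverse (f (gmul s t))"

definition is_cobdry :: "'g measure \<Rightarrow> ('g \<Rightarrow> 'g \<Rightarrow> 'g) \<Rightarrow> ('g \<Rightarrow> 'g \<Rightarrow> complex) \<Rightarrow> bool" where
  "is_cobdry M gmul c \<longleftrightarrow> (\<exists>f\<in>C1 M. \<forall>s\<in>space M. \<forall>t\<in>space M. c s t = cobdry gmul f s t)"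

text \<open>Borel 2-cocycles with values in C(X,T); u s t x stands for u(s,t)(x).\<close>
definition Z2 :: "'g measure \<Rightarrow> ('g \<Rightarrow> 'g \<Rightarrow> 'g) \<Rightarrow> real set \<Rightarrow> ('g \<Rightarrow> 'g \<Rightarrow> real \<Rightarrow> complex) set" where
  "Z2 M gmul X = {u. (\<lambda>(s,t). restrict (u s t) X) \<in> measurable (M \<Otimes>\<^sub>M M) (CXT_M X) \<and>
     (\<forall>r\<in>space M. \<forall>s\<in>space M. \<forall>t\<in>space M. \<forall>x\<in>X.
        u r s x * u (gmul r s) t x = u r (gmul s t) x * u s t x)}"

definition pointwise_trivial :: "'g measure \<Rightarrow> ('g \<Rightarrow> 'g \<Rightarrow> 'g) \<Rightarrow> real set \<Rightarrow> ('g \<Rightarrow> 'g \<Rightarrow> real \<Rightarrow> complex) \<Rightarrow> bool" where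
  "pointwise_trivial M gmul X u \<longleftrightarrow> (\<forall>x\<in>X. is_cobdry M gmul (\<lambda>s t. u s t x))"

definition cohomologous :: "'g measure \<Rightarrow> ('g \<Rightarrow> 'g \<Rightarrow> 'g) \<Rightarrow> real set \<Rightarrow>
    ('g \<Rightarrow> 'g \<Rightarrow> real \<Rightarrow> complex) \<Rightarrow> ('g \<Rightarrow> 'g \<Rightarrow> real \<Rightarrow> complex) \<Rightarrow> bool" where
  "cohomologous M gmul X u w \<longleftrightarrow> (\<exists>F. (\<lambda>s. restrict (F s) X) \<in> measurable M (CXT_M X) \<and>
     (\<forall>s\<in>space M. \<forall>t\<in>space M. \<forall>x\<in>X.
        u s t x = w s t x * (F s x * F t x * inverse (F (gmul s t) x))))"

text \<open>The space Z_u, carrying the product (pointwise) topology on functions times X.\<close>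
definition Zspace :: "'g measure \<Rightarrow> ('g \<Rightarrow> 'g \<Rightarrow> 'g) \<Rightarrow> real set \<Rightarrow>
    ('g \<Rightarrow> 'g \<Rightarrow> real \<Rightarrow> complex) \<Rightarrow> (('g \<Rightarrow> complex) \<times> real) set" where
  "Zspace M gmul X u = {(f,x). f \<in> C1 M \<and> x \<in> X \<and>
     (\<forall>s\<in>space M. \<forall>t\<in>space M. cobdry gmul f s t = u s t x)}"

definition Gcar :: "(real \<times> real \<times> complex \<times> complex) set" where
  "Gcar = {(s,t,z,w). cmod z = 1 \<and> cmod w = 1}"

definition GM :: "(real \<times> real \<times> complex \<times> complex) measure" where
  "GM = restrict_space borel Gcar"

definition Gmult :: "real \<Rightarrow> (real \<times> real \<times> complex \<times> complex) \<Rightarrow> (real \<times> real \<times> complex \<times> complex)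
     \<Rightarrow> (real \<times> real \<times> complex \<times> complex)" where
  "Gmult \<theta> g h = (case g of (s1,t1,z1,w1) \<Rightarrow> case h of (s2,t2,z2,w2) \<Rightarrow>
     (s1+s2, t1+t2, exp (\<i> * of_real (s1*t2)) * z1 * z2, exp (\<i> * of_real (\<theta> * s1 * t2)) * w1 * w2))"

definition Gab_quot :: "(real \<times> real \<times> complex \<times> complex) \<Rightarrow> real \<times> real" where
  "Gab_quot g = (fst g, fst (snd g))"

definition infl :: "((real \<times> real) \<Rightarrow> (real \<times> real) \<Rightarrow> real \<Rightarrow> complex) \<Rightarrow>
    (real \<times> real \<times> complex \<times> complex) \<Rightarrow> (real \<times> real \<times> complex \<times> complex) \<Rightarrow> real \<Rightarrow> complex" where
  "infl v g h = v (Gab_quot g) (Gab_quot h)"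

definition Xset :: "real set" where
  "Xset = {0} \<union> {1 / real n | n. n \<ge> 1}"

end

theory Submission
  imports Defs
begin


lemma cos_not_all_tendsto:
  fixes b :: "nat \<Rightarrow> int"
  assumes ev: "eventually (\<lambda>n. b n \<noteq> 0) sequentially"
  shows "\<exists>t. \<not> ((\<lambda>n. cos (real_of_int (b n) * t)) \<longlonglongrightarrow> 1)"
proof (rule ccontr)
  assume "\<not> ?thesis"
  then have conv: "\<And>t. (\<lambda>n. cos (real_of_int (b n) * t)) \<longlonglongrightarrow> 1" by auto
  have intz: "((\<lambda>t. cos (real_of_int c * t)) has_integral 0) {0..2*pi}" if "c \<noteq> 0" for c :: int
  proof -
    have "((\<lambda>t. cos (real_of_int c * t)) has_integral
        (sin (real_of_int c * (2*pi)) / c - sin (real_of_int c * 0) / c)) {0..2*pi}"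
      apply (rule fundamental_theorem_of_calculus)
      using that by (auto intro!: derivative_eq_intros
          simp: has_real_derivative_iff_has_vector_derivative[symmetric])
    moreover have "sin (real_of_int c * (2*pi)) = 0" using sin_int_2pin[of c] by (simp add: mult.commute)
    ultimately show ?thesis by simp
  qed
  have "(\<lambda>n. integral {0..2*pi} (\<lambda>t. cos (real_of_int (b n) * t))) \<longlonglongrightarrow> integral {0..2*pi} (\<lambda>t. 1::real)"
    by (rule dominated_convergence(2)[where h="\<lambda>_. 1"])
       (auto intro!: integrable_continuous_real continuous_intros conv)
  moreover have "eventually (\<lambda>n. integral {0..2*pi} (\<lambda>t. cos (real_of_int (b n) * t)) = 0) sequentially"
    using ev by (rule eventually_mono) (use intz integral_unique in blast)
  ultimately have "(\<lambda>n. 0::real) \<longlonglongrightarrow> integral {0..2*pi} (\<lambda>t. 1::real)"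
    by (rule Lim_transform_eventually)
  then have "integral {0..2*pi} (\<lambda>t. 1::real) = 0" using LIMSEQ_unique tendsto_const by metis
  then show False by simp
qed



lemma unit_set_integrable:
  fixes \<rho> :: "real \<Rightarrow> complex"
  assumes meas: "\<rho> \<in> borel_measurable borel" and unit: "\<And>x. cmod (\<rho> x) = 1"
  shows "set_integrable lborel {a..b} \<rho>"
  unfolding set_integrable_def
proof (rule integrableI_bounded_set[where A="{a..b}" and B=1])
  show "(\<lambda>x. indicat_real {a..b} x *\<^sub>R \<rho> x) \<in> borel_measurable lborel"
    using meas by measurable
qed (auto simp: unit indicator_def emeasure_lborel_Icc_eq)

lemma unit_integrable_on:
  fixes \<rho> :: "real \<Rightarrow> complex"
  assumes meas: "\<rho> \<in> borel_measurable borel" and unit: "\<And>x. cmod (\<rho> x) = 1"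
  shows "\<rho> integrable_on {a..b}" "(LINT x:{a..b}|lborel. \<rho> x) = integral {a..b} \<rho>"
  using set_borel_integral_eq_integral[OF unit_set_integrable[OF assms]] by auto



lemma exists_nonzero_integral:
  fixes \<rho> :: "real \<Rightarrow> complex"
  assumes meas: "\<rho> \<in> borel_measurable borel" and unit: "\<And>x. cmod (\<rho> x) = 1"
  shows "\<exists>\<delta>>0. integral {0..\<delta>} \<rho> \<noteq> 0"
proof (rule ccontr)
  assume "\<not> ?thesis"
  hence z: "\<And>\<delta>. \<delta> > 0 \<Longrightarrow> integral {0..\<delta>} \<rho> = 0" by auto
  have z0: "integral {0..\<delta>} \<rho> = 0" if "\<delta> \<ge> 0" for \<delta>
    using z[of \<delta>] that by (cases "\<delta> = 0") auto
  have si: "set_integrable lborel {a..b} \<rho>" for a b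
    by (rule unit_set_integrable[OF meas unit])
  have zab: "(LINT x:{a..b}|lborel. \<rho> x) = 0" if "0 \<le> a" "a \<le> b" for a b
  proof -
    have "integral {0..a} \<rho> + integral {a..b} \<rho> = integral {0..b} \<rho>"
      using Henstock_Kurzweil_Integration.integral_combine[where a=0 and c=a and b=b and f=\<rho>] that unit_integrable_on[OF meas unit] by auto
    then have "integral {a..b} \<rho> = 0" using z0 that by auto
    then show ?thesis using unit_integrable_on(2)[OF meas unit] by simp
  qed
  have P: "(LINT x:(A \<inter> {0..1})|lborel. \<rho> x) = 0" if "A \<in> sets borel" for A
    using that
  proof (induction rule: borel_set_induct)
    case empty
    then show ?case by (simp add: set_lebesgue_integral_def)
  next
    case (interval a b)
    show ?case
    proof (cases "max a 0 \<le> min b 1")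
      case True
      have "{a..b} \<inter> {0..1} = {max a 0..min b 1}" by auto
      then show ?thesis using zab[of "max a 0" "min b 1"] True by simp
    next
      case False
      then have "{a..b} \<inter> {0..1} = {}" by auto
      then show ?thesis by (simp add: set_lebesgue_integral_def)
    qed
  next
    case (compl A)
    have A01: "A \<inter> {0..1} \<in> sets lborel" using compl by auto
    have cA01: "- A \<inter> {0..1} \<in> sets lborel" using compl by auto
    have eq: "{0..1} = (A \<inter> {0..1}) \<union> (- A \<inter> {0..1})" by auto
    have "(LINT x:{0..1}|lborel. \<rho> x) = (LINT x:(A \<inter> {0..1})|lborel. \<rho> x) + (LINT x:(- A \<inter> {0..1})|lborel. \<rho> x)"
      apply (subst eq)
      apply (rule set_integral_Un)
      using set_integrable_subset[OF si[of 0 1]] A01 cA01 by auto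
    then show ?case using zab[of 0 1] compl.IH by simp
  next
    case (union f)
    define g where "g n = (\<Union>i<n. f i \<inter> {0..1})" for n
    have gs: "g n \<in> sets lborel" for n unfolding g_def using union by auto
    have inc: "incseq g" unfolding g_def incseq_def by (auto, meson lessThan_iff less_le_trans)
    have U: "(\<Union>n. g n) = (\<Union>i. f i) \<inter> {0..1}" unfolding g_def by auto
    have "(\<lambda>n. LINT x:(g n)|lborel. \<rho> x) \<longlonglongrightarrow> (LINT x:(\<Union>n. g n)|lborel. \<rho> x)"
      apply (rule set_integral_cont_up[OF gs inc])
      unfolding U using set_integrable_subset[OF si[of 0 1]] union by auto
    moreover have "(LINT x:(g n)|lborel. \<rho> x) = 0" for n
    proof -
      have "(LINT x:(g n)|lborel. \<rho> x) = (\<Sum>i\<in>{..<n}. LINT x:(f i \<inter> {0..1})|lborel. \<rho> x)"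
        unfolding g_def
        apply (rule set_integral_finite_Union)
        using union set_integrable_subset[OF si[of 0 1]]
        by (auto simp: disjoint_family_on_def)
      then show ?thesis using union.IH by simp
    qed
    ultimately have "(\<lambda>n. 0::complex) \<longlonglongrightarrow> (LINT x:(\<Union>n. g n)|lborel. \<rho> x)" by simp
    then have "(LINT x:(\<Union>n. g n)|lborel. \<rho> x) = 0" using LIMSEQ_unique tendsto_const by blast
    then show ?case unfolding U .
  qed
  define h where "h x = indicat_real {0..1} x *\<^sub>R \<rho> x" for x
  have ih: "integrable lborel h" using si[of 0 1] unfolding set_integrable_def h_def .
  have AEh: "AE x in lborel. h x = 0"
  proof (rule sigma_finite_measure.density_zero[OF _ ih])
    fix A :: "real set" assume "A \<in> sets lborel"
    then have "A \<in> sets borel" by simp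
    have "set_lebesgue_integral lborel A h = (LINT x:(A \<inter> {0..1})|lborel. \<rho> x)"
      unfolding set_lebesgue_integral_def h_def
      by (rule Bochner_Integration.integral_cong) (auto simp: indicator_def)
    then show "set_lebesgue_integral lborel A h = 0" using P[OF \<open>A \<in> sets borel\<close>] by simp
  qed (rule sigma_finite_lborel)
  have imp: "\<forall>x. h x = 0 \<longrightarrow> x \<notin> {0..1}"
    using unit by (auto simp: h_def indicator_def) (metis norm_zero zero_neq_one)
  have "AE x in lborel. x \<notin> {0..1::real}"
    using AEh by (rule eventually_mono) (use imp in blast)
  then have "{0..1::real} \<in> null_sets lborel" by (subst AE_iff_null_sets) auto
  then show False by (auto simp: null_sets_def)
qed



lemma hom_trivial_dense:
  fixes \<rho> :: "real \<Rightarrow> complex"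
  assumes meas: "\<rho> \<in> borel_measurable borel" and unit: "\<And>x. cmod (\<rho> x) = 1"
    and hom: "\<And>x y. \<rho> (x + y) = \<rho> x * \<rho> y"
    and dense: "\<And>x e. e > 0 \<Longrightarrow> \<exists>d. \<rho> d = 1 \<and> \<bar>d - x\<bar> < e"
  shows "\<rho> x = 1"
proof -
  obtain \<delta> where \<delta>: "\<delta> > 0" "integral {0..\<delta>} \<rho> \<noteq> 0"
    using exists_nonzero_integral[OF meas unit] by blast
  define J where "J = integral {0..\<delta>} \<rho>"
  have int: "\<rho> integrable_on {a..b}" for a b using unit_integrable_on[OF meas unit] by auto
  have shift: "integral {s..s+\<delta>} \<rho> = \<rho> s * J" for s
  proof -
    have "integral {0..\<delta>} (\<rho> \<circ> (+) s) = integral {0+s..\<delta>+s} \<rho>"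
      by (rule integral_shift_Icc_real)
    moreover have "\<rho> \<circ> (+) s = (\<lambda>y. \<rho> s * \<rho> y)" using hom by (auto simp: o_def)
    moreover have "integral {0..\<delta>} (\<lambda>y. \<rho> s * \<rho> y) = \<rho> s * J"
      unfolding J_def
      by (rule integral_unique, rule has_integral_mult_right, rule integrable_integral, rule int)
    ultimately show ?thesis by (simp add: add.commute)
  qed
  define K where "K y = integral {x-1..y} \<rho>" for y
  have Kc: "continuous_on {x-1..x+2+\<delta>} K"
    unfolding K_def by (rule indefinite_integral_continuous_1, rule int)
  have rep: "\<rho> y = (K (y+\<delta>) - K y) / J" if "y \<in> {x-1..x+1}" for y
  proof -
    have "integral {x-1..y} \<rho> + integral {y..y+\<delta>} \<rho> = integral {x-1..y+\<delta>} \<rho>"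
      using Henstock_Kurzweil_Integration.integral_combine[where a="x-1" and c=y and b="y+\<delta>" and f=\<rho>]
        that \<delta> int by auto
    then show ?thesis using shift[of y] \<delta> unfolding K_def J_def by (auto simp: field_simps)
  qed
  have c1: "continuous_on {x-1..x+1} (\<lambda>y. K (y + \<delta>))"
    apply (rule continuous_on_compose2[OF Kc])
    using \<delta> by (auto intro!: continuous_intros)
  have c2: "continuous_on {x-1..x+1} K"
    by (rule continuous_on_subset[OF Kc]) (use \<delta> in auto)
  have "continuous_on {x-1..x+1} (\<lambda>y. (K (y+\<delta>) - K y) / J)"
    using c1 c2 \<delta> unfolding J_def by (auto intro!: continuous_intros)
  then have "continuous_on {x-1..x+1} \<rho>"
    by (rule continuous_on_eq) (use rep in auto)
  then have ic: "isCont \<rho> x"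
    by (rule continuous_on_interior) auto
  have "\<forall>n::nat. \<exists>d. \<rho> d = 1 \<and> \<bar>d - x\<bar> < 1 / (Suc n)"
    using dense by auto
  then obtain d where d: "\<And>n. \<rho> (d n) = 1" "\<And>n. \<bar>d n - x\<bar> < 1 / (Suc n)"
    by metis
  have "(\<lambda>n. d n - x) \<longlonglongrightarrow> 0"
  proof (rule Lim_null_comparison)
    show "\<forall>\<^sub>F n in sequentially. norm (d n - x) \<le> inverse (real (Suc n))"
      using d(2) by (simp add: inverse_eq_divide less_imp_le)
    show "(\<lambda>n. inverse (real (Suc n))) \<longlonglongrightarrow> 0" by (rule LIMSEQ_inverse_real_of_nat)
  qed
  then have "d \<longlonglongrightarrow> x" by (simp add: Lim_null[symmetric])
  then have "(\<lambda>n. \<rho> (d n)) \<longlonglongrightarrow> \<rho> x" by (rule isCont_tendsto_compose[OF ic])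
  then have "(\<lambda>n. 1::complex) \<longlonglongrightarrow> \<rho> x" using d(1) by simp
  then show ?thesis using LIMSEQ_unique tendsto_const by metis
qed



lemma space_GM[simp]: "space GM = Gcar"
  by (simp add: GM_def space_restrict_space)

lemma exp_unit[simp]: "cmod (exp (\<i> * complex_of_real r)) = 1"
  by (rule norm_exp_i_times)

lemma central_in_Gcar: "cmod z = 1 \<Longrightarrow> cmod w = 1 \<Longrightarrow> (s, t, z, w) \<in> Gcar"
  by (simp add: Gcar_def)

lemma homC_trivial:
  fixes ch :: "real \<times> real \<times> complex \<times> complex \<Rightarrow> complex"
  assumes irr: "\<theta> \<notin> \<rat>"
    and meas: "ch \<in> borel_measurable GM"
    and unit: "\<forall>g\<in>Gcar. cmod (ch g) = 1"
    and hom: "\<And>z1 w1 z2 w2. cmod z1 = 1 \<Longrightarrow> cmod w1 = 1 \<Longrightarrow> cmod z2 = 1 \<Longrightarrow> cmod w2 = 1 \<Longrightarrow>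
       ch (0, 0, z1 * z2, w1 * w2) = ch (0, 0, z1, w1) * ch (0, 0, z2, w2)"
    and line: "\<And>r. ch (0, 0, exp (\<i> * of_real r), exp (\<i> * of_real (\<theta> * r))) = 1"
  shows "ch (0, 0, 1, exp (\<i> * of_real t)) = 1"
proof -
  define \<rho> where "\<rho> \<beta> = ch (0, 0, 1, exp (\<i> * of_real \<beta>))" for \<beta>
  have phim: "(\<lambda>\<beta>::real. (0::real, 0::real, 1::complex, exp (\<i> * of_real \<beta>))) \<in> measurable borel GM"
    unfolding GM_def
    by (rule measurable_restrict_space2) (auto simp: Gcar_def)
  have m: "\<rho> \<in> borel_measurable borel"
    unfolding \<rho>_def using measurable_comp[OF phim meas] by (simp add: o_def)
  have u: "cmod (\<rho> x) = 1" for x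
    unfolding \<rho>_def using unit by (auto simp: Gcar_def)
  have h: "\<rho> (x + y) = \<rho> x * \<rho> y" for x y
    unfolding \<rho>_def using hom[of 1 "exp (\<i> * of_real x)" 1 "exp (\<i> * of_real y)"]
    by (simp add: distrib_left exp_add)
  have d: "\<exists>d. \<rho> d = 1 \<and> \<bar>d - x\<bar> < e" if "e > 0" for x e
  proof -
    obtain hh k :: int where hk: "k > 0" "\<bar>of_int k * \<theta> - of_int hh - x / (2*pi)\<bar> < e / (2*pi)"
    proof -
      have pos: "e / (2*pi) > 0" using \<open>e > 0\<close> by simp
      show ?thesis
        using sequence_of_fractional_parts_is_dense[OF irr pos, where \<alpha>="x / (2*pi)"] that by blast
    qed
    define d where "d = 2 * pi * (of_int k * \<theta> - of_int hh)"
    have "\<bar>d - x\<bar> = 2 * pi * \<bar>of_int k * \<theta> - of_int hh - x / (2*pi)\<bar>"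
      unfolding d_def by (simp add: abs_mult[symmetric] field_simps)
    also have "\<dots> < 2 * pi * (e / (2 * pi))" using hk(2) by (intro mult_strict_left_mono) auto
    also have "\<dots> = e" by simp
    finally have dx: "\<bar>d - x\<bar> < e" .
    have e1: "exp (\<i> * of_real d) = exp (\<i> * of_real (\<theta> * (2 * pi * of_int k)))"
    proof -
      have "\<i> * of_real d = \<i> * of_real (\<theta> * (2 * pi * of_int k)) - (2 * of_int hh * pi) * \<i>"
        unfolding d_def by (simp add: algebra_simps)
      then have "exp (\<i> * of_real d) = exp (\<i> * of_real (\<theta> * (2 * pi * of_int k))) / exp ((2 * of_int hh * pi) * \<i>)"
        by (simp add: exp_diff)
      also have "exp ((2 * of_int hh * pi) * \<i>) = 1"
        by (rule exp_integer_2pi) simp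
      finally show ?thesis by simp
    qed
    have e2: "exp (\<i> * of_real (2 * pi * of_int k)) = 1"
      using exp_integer_2pi[of "of_int k"] by (simp add: mult.commute mult.left_commute)
    have "\<rho> d = 1"
      unfolding \<rho>_def e1 using line[of "2 * pi * of_int k"] e2 by simp
    then show ?thesis using dx by blast
  qed
  have "\<rho> t = 1" by (rule hom_trivial_dense[OF m u h d])
  then show ?thesis by (simp add: \<rho>_def)
qed



lemma Gmult_central: "Gmult \<theta> (0, 0, z1, w1) (0, 0, z2, w2) = (0, 0, z1 * z2, w1 * w2)"
  by (simp add: Gmult_def)

lemma Gmult_in: "g \<in> Gcar \<Longrightarrow> h \<in> Gcar \<Longrightarrow> Gmult \<theta> g h \<in> Gcar"
  by (auto simp: Gmult_def Gcar_def norm_mult split: prod.splits)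

lemma homG_trivial:
  fixes ch :: "real \<times> real \<times> complex \<times> complex \<Rightarrow> complex"
  assumes irr: "\<theta> \<notin> \<rat>"
    and meas: "ch \<in> borel_measurable GM"
    and unit: "\<forall>g\<in>Gcar. cmod (ch g) = 1"
    and hom: "\<forall>g\<in>Gcar. \<forall>h\<in>Gcar. ch (Gmult \<theta> g h) = ch g * ch h"
  shows "ch (0, 0, 1, exp (\<i> * of_real t)) = 1"
proof (rule homC_trivial[OF irr meas unit])
  fix z1 w1 z2 w2 :: complex
  assume "cmod z1 = 1" "cmod w1 = 1" "cmod z2 = 1" "cmod w2 = 1"
  show "ch (0, 0, z1 * z2, w1 * w2) = ch (0, 0, z1, w1) * ch (0, 0, z2, w2)"
  proof -
    have "(0::real, 0::real, z1, w1) \<in> Gcar" "(0::real, 0::real, z2, w2) \<in> Gcar"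
      using \<open>cmod z1 = 1\<close> \<open>cmod w1 = 1\<close> \<open>cmod z2 = 1\<close> \<open>cmod w2 = 1\<close> by (auto simp: Gcar_def)
    then show ?thesis using hom Gmult_central[of \<theta> z1 w1 z2 w2] by metis
  qed
next
  fix r :: real
  define g where "g = (r, 0::real, 1::complex, 1::complex)"
  define h where "h = (0::real, 1::real, 1::complex, 1::complex)"
  define c where "c = (0::real, 0::real, exp (\<i> * of_real r), exp (\<i> * of_real (\<theta> * r)))"
  have gG: "g \<in> Gcar" and hG: "h \<in> Gcar" and cG: "c \<in> Gcar"
    by (auto simp: g_def h_def c_def Gcar_def)
  have hg: "Gmult \<theta> h g = (r, 1, 1, 1)" by (simp add: Gmult_def g_def h_def)
  have hgG: "Gmult \<theta> h g \<in> Gcar" using Gmult_in[OF hG gG] .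
  have gh: "Gmult \<theta> g h = Gmult \<theta> c (Gmult \<theta> h g)"
    by (simp add: Gmult_def g_def h_def c_def)
  have "ch c * ch (Gmult \<theta> h g) = ch (Gmult \<theta> h g)"
    using hom gG hG cG hgG gh by (metis mult.commute)
  moreover have "ch (Gmult \<theta> h g) \<noteq> 0" using unit hgG by fastforce
  ultimately show "ch (0, 0, exp (\<i> * of_real r), exp (\<i> * of_real (\<theta> * r))) = 1"
    unfolding c_def by simp
qed



lemma powi_measurable[measurable]:
  fixes f :: "'a \<Rightarrow> complex"
  assumes [measurable]: "f \<in> borel_measurable M"
  shows "(\<lambda>x. f x powi n) \<in> borel_measurable M"
proof (cases "n \<ge> 0")
  case True
  then show ?thesis by (simp add: power_int_def)
next
  case False
  then show ?thesis by (simp add: power_int_def)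
qed

definition fw :: "real \<Rightarrow> int \<Rightarrow> int \<Rightarrow> real \<times> real \<times> complex \<times> complex \<Rightarrow> complex" where
  "fw \<theta> a b = restrict (\<lambda>g. fst (snd (snd g)) powi (-a) * snd (snd (snd g)) powi (-b)) Gcar"

lemma unit_powi: "cmod z = 1 \<Longrightarrow> cmod (z powi n) = 1"
  by (simp add: norm_power_int)

lemma fw_C1: "fw \<theta> a b \<in> C1 GM"
proof -
  have m: "(\<lambda>g::real \<times> real \<times> complex \<times> complex. fst (snd (snd g)) powi (-a) * snd (snd (snd g)) powi (-b))
      \<in> borel_measurable borel"
  proof -
    have c1: "(\<lambda>g::real \<times> real \<times> complex \<times> complex. fst (snd (snd g))) \<in> borel_measurable borel"
      by (intro borel_measurable_continuous_onI continuous_intros)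
    have c2: "(\<lambda>g::real \<times> real \<times> complex \<times> complex. snd (snd (snd g))) \<in> borel_measurable borel"
      by (intro borel_measurable_continuous_onI continuous_intros)
    show ?thesis by (intro borel_measurable_times powi_measurable c1 c2)
  qed
  have "fw \<theta> a b \<in> borel_measurable GM"
    unfolding GM_def fw_def
    apply (rule measurable_cong[THEN iffD2, OF _ measurable_restrict_space1[OF m]])
    by (simp add: space_restrict_space)
  moreover have "\<forall>s\<in>space GM. cmod (fw \<theta> a b s) = 1"
    by (auto simp: fw_def Gcar_def norm_mult unit_powi)
  moreover have "fw \<theta> a b \<in> extensional (space GM)" by (simp add: fw_def)
  ultimately show ?thesis by (simp add: C1_def)
qed

lemma fw_cobdry:
  assumes "g \<in> Gcar" "h \<in> Gcar"
  shows "cobdry (Gmult \<theta>) (fw \<theta> a b) g h = exp (\<i> * of_real ((a + \<theta> * b) * fst g * fst (snd h)))"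
proof -
  obtain s1 t1 z1 w1 where g: "g = (s1, t1, z1, w1)" by (cases g) auto
  obtain s2 t2 z2 w2 where h: "h = (s2, t2, z2, w2)" by (cases h) auto
  have u: "cmod z1 = 1" "cmod w1 = 1" "cmod z2 = 1" "cmod w2 = 1" using assms by (auto simp: g h Gcar_def)
  then have nz: "z1 \<noteq> 0" "w1 \<noteq> 0" "z2 \<noteq> 0" "w2 \<noteq> 0" by auto
  have gh: "Gmult \<theta> g h = (s1 + s2, t1 + t2, exp (\<i> * of_real (s1 * t2)) * z1 * z2, exp (\<i> * of_real (\<theta> * s1 * t2)) * w1 * w2)"
    by (simp add: g h Gmult_def)
  have ghG: "Gmult \<theta> g h \<in> Gcar" using Gmult_in[OF assms] .
  define P where "P = z1 powi (-a) * w1 powi (-b) * (z2 powi (-a) * w2 powi (-b))"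
  define E where "E = exp (of_int (-a) * (\<i> * of_real (s1 * t2))) * exp (of_int (-b) * (\<i> * of_real (\<theta> * s1 * t2)))"
  have P0: "P \<noteq> 0" using nz by (simp add: P_def)
  have fg: "fw \<theta> a b g * fw \<theta> a b h = P" using assms by (simp add: fw_def g h P_def)
  have fgh: "fw \<theta> a b (Gmult \<theta> g h) = E * P"
    using ghG unfolding fw_def gh
    by (simp add: power_int_mult_distrib exp_power_int E_def P_def mult_ac)
  have "cobdry (Gmult \<theta>) (fw \<theta> a b) g h = inverse E"
    unfolding cobdry_def using fg fgh P0 by (simp add: field_simps)
  also have "inverse E = exp (\<i> * of_real ((a + \<theta> * b) * s1 * t2))"
    unfolding E_def by (simp add: exp_add[symmetric] exp_minus[symmetric] algebra_simps)
  finally show ?thesis by (simp add: g h)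
qed



lemma solution_value:
  fixes a b :: int and \<theta> :: real
  assumes irr: "\<theta> \<notin> \<rat>"
    and f: "f \<in> C1 GM"
    and cob: "\<forall>g\<in>Gcar. \<forall>h\<in>Gcar. cobdry (Gmult \<theta>) f g h = exp (\<i> * of_real ((a + \<theta> * b) * fst g * fst (snd h)))"
  shows "f (0, 0, 1, exp (\<i> * of_real t)) = exp (\<i> * of_real t) powi (-b)"
proof -
  define ch where "ch g = f g / fw \<theta> a b g" for g
  have fm: "f \<in> borel_measurable GM" and fu: "\<forall>g\<in>Gcar. cmod (f g) = 1"
    using f by (auto simp: C1_def)
  have wm: "fw \<theta> a b \<in> borel_measurable GM" and wu: "\<forall>g\<in>Gcar. cmod (fw \<theta> a b g) = 1"
    using fw_C1[of \<theta> a b] by (auto simp: C1_def)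
  have m: "ch \<in> borel_measurable GM" unfolding ch_def using fm wm by measurable
  have u: "\<forall>g\<in>Gcar. cmod (ch g) = 1" unfolding ch_def using fu wu by (simp add: norm_divide)
  have h: "\<forall>g\<in>Gcar. \<forall>h\<in>Gcar. ch (Gmult \<theta> g h) = ch g * ch h"
  proof (intro ballI)
    fix g h assume gh: "g \<in> Gcar" "h \<in> Gcar"
    define U where "U = exp (\<i> * of_real ((a + \<theta> * b) * fst g * fst (snd h)))"
    have U0: "U \<noteq> 0" by (simp add: U_def)
    have ghG: "Gmult \<theta> g h \<in> Gcar" by (rule Gmult_in[OF gh])
    have n1: "f (Gmult \<theta> g h) \<noteq> 0" using fu ghG by fastforce
    have n2: "fw \<theta> a b (Gmult \<theta> g h) \<noteq> 0" using wu ghG by fastforce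
    have n3: "fw \<theta> a b g \<noteq> 0" "fw \<theta> a b h \<noteq> 0" using wu gh by fastforce+
    have e1: "f g * f h * inverse (f (Gmult \<theta> g h)) = U"
      using cob gh unfolding cobdry_def U_def by auto
    have e2: "fw \<theta> a b g * fw \<theta> a b h * inverse (fw \<theta> a b (Gmult \<theta> g h)) = U"
      using fw_cobdry[OF gh, of \<theta> a b] unfolding cobdry_def U_def by auto
    have e1': "f (Gmult \<theta> g h) = f g * f h / U" using e1 n1 U0 by (auto simp: field_simps)
    have e2': "fw \<theta> a b (Gmult \<theta> g h) = fw \<theta> a b g * fw \<theta> a b h / U" using e2 n2 U0 by (auto simp: field_simps)
    show "ch (Gmult \<theta> g h) = ch g * ch h"
      unfolding ch_def e1' e2' using U0 n3 by (simp add: field_simps)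
  qed
  have "ch (0, 0, 1, exp (\<i> * of_real t)) = 1" by (rule homG_trivial[OF irr m u h])
  moreover have g0: "(0::real, 0::real, 1::complex, exp (\<i> * of_real t)) \<in> Gcar" by (simp add: Gcar_def)
  moreover have "fw \<theta> a b (0, 0, 1, exp (\<i> * of_real t)) \<noteq> 0" using wu g0 by fastforce
  ultimately show ?thesis by (simp add: ch_def fw_def)
qed



lemma exp_i_lipschitz: "cmod (exp (\<i> * of_real \<alpha>) - exp (\<i> * of_real \<beta>)) \<le> \<bar>\<alpha> - \<beta>\<bar>"
proof -
  have "exp (\<i> * of_real \<alpha>) - exp (\<i> * of_real \<beta>) = exp (\<i> * of_real \<beta>) * (exp (\<i> * of_real (\<alpha> - \<beta>)) - 1)"
    by (simp add: algebra_simps exp_diff[symmetric] exp_add[symmetric] of_real_diff)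
  then have "cmod (exp (\<i> * of_real \<alpha>) - exp (\<i> * of_real \<beta>)) = cmod (exp (\<i> * of_real (\<alpha> - \<beta>)) - 1)"
    by (simp add: norm_mult)
  also have "\<dots> = 2 * \<bar>sin ((\<alpha> - \<beta>) / 2)\<bar>" by (rule dist_exp_i_1)
  also have "\<dots> \<le> 2 * \<bar>(\<alpha> - \<beta>) / 2\<bar>" using abs_sin_x_le_abs_x[of "(\<alpha> - \<beta>) / 2"] by linarith
  finally show ?thesis by simp
qed

lemma Xset_alt: "Xset = insert 0 (range (\<lambda>n. 1 / real (Suc n)))"
proof -
  have "{1 / real n | n. n \<ge> 1} = range (\<lambda>n. 1 / real (Suc n))"
  proof safe
    fix n :: nat assume "n \<ge> 1"
    then show "1 / real n \<in> range (\<lambda>n. 1 / real (Suc n))"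
      by (rule_tac x="n - 1" in image_eqI) auto
  next
    fix n :: nat show "\<exists>m. 1 / real (Suc n) = 1 / real m \<and> m \<ge> 1"
      by (rule exI[of _ "Suc n"]) auto
  qed
  then show ?thesis unfolding Xset_def by auto
qed

lemma compact_Xset: "compact Xset"
proof -
  have "(\<lambda>n. 1 / real (Suc n)) \<longlonglongrightarrow> 0"
    using LIMSEQ_inverse_real_of_nat by (simp add: inverse_eq_divide)
  then show ?thesis unfolding Xset_alt by (rule compact_sequence_with_limit)
qed

lemma space_CXT_M[simp]: "space (CXT_M X) = CXT X"
  unfolding CXT_M_def by (rule space_measure_of) (auto simp: cxt_open_def)

lemma sets_CXT_M: "sets (CXT_M X) = sigma_sets (CXT X) (Collect (cxt_open X))"
  unfolding CXT_M_def by (rule sets_measure_of) (auto simp: cxt_open_def)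

lemma measurable_CXT_M_from_open:
  assumes "\<And>p. \<Phi> p \<in> CXT X" and "\<And>U. cxt_open X U \<Longrightarrow> open (\<Phi> -` U)"
  shows "\<Phi> \<in> measurable borel (CXT_M X)"
  unfolding CXT_M_def
  by (rule measurable_measure_of) (use assms in \<open>auto simp: cxt_open_def\<close>)

lemma E_measurable:
  fixes lam :: "real \<Rightarrow> real"
  assumes cont: "continuous_on Xset lam"
  shows "(\<lambda>p::real \<times> real. restrict (\<lambda>x. exp (\<i> * of_real (lam x * fst p * snd p))) Xset)
          \<in> measurable borel (CXT_M Xset)"
proof (rule measurable_CXT_M_from_open)
  fix p :: "real \<times> real"
  have "continuous_on Xset (\<lambda>x. exp (\<i> * of_real (lam x * fst p * snd p)))"
    by (intro continuous_intros cont)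
  then have "continuous_on Xset (restrict (\<lambda>x. exp (\<i> * of_real (lam x * fst p * snd p))) Xset)"
    by (rule continuous_on_eq) auto
  then show "restrict (\<lambda>x. exp (\<i> * of_real (lam x * fst p * snd p))) Xset \<in> CXT Xset"
    by (simp add: CXT_def)
next
  fix U assume U: "cxt_open Xset U"
  define E where "E p = restrict (\<lambda>x. exp (\<i> * of_real (lam x * fst p * snd p))) Xset" for p :: "real \<times> real"
  have EC: "E p \<in> CXT Xset" for p
  proof -
    have "continuous_on Xset (\<lambda>x. exp (\<i> * of_real (lam x * fst p * snd p)))"
      by (intro continuous_intros cont)
    then have "continuous_on Xset (E p)"
      unfolding E_def by (rule continuous_on_eq) auto
    then show ?thesis by (simp add: CXT_def E_def)
  qed
  have "compact (lam ` Xset)" by (rule compact_continuous_image[OF cont compact_Xset])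
  then have "bounded (lam ` Xset)" by (rule compact_imp_bounded)
  then obtain L where L: "L > 0" "\<And>x. x \<in> Xset \<Longrightarrow> \<bar>lam x\<bar> \<le> L"
    unfolding bounded_pos by auto
  have "open (E -` U)"
    unfolding open_dist
  proof (intro ballI)
    fix p0 assume "p0 \<in> E -` U"
    then have "E p0 \<in> U" by simp
    then obtain r where r: "r > 0" "\<And>g. g \<in> CXT Xset \<Longrightarrow> (\<forall>x\<in>Xset. dist (E p0 x) (g x) < r) \<Longrightarrow> g \<in> U"
      using U unfolding cxt_open_def by blast
    have "isCont (\<lambda>p::real \<times> real. fst p * snd p) p0" by (intro continuous_intros)
    then obtain e where e: "e > 0" "\<And>p. dist p p0 < e \<Longrightarrow> dist (fst p * snd p) (fst p0 * snd p0) < r / L"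
      unfolding continuous_at_eps_delta using r L by (metis divide_pos_pos)
    have "\<forall>p. dist p p0 < e \<longrightarrow> p \<in> E -` U"
    proof (intro allI impI)
      fix p assume "dist p p0 < e"
      then have d: "\<bar>fst p * snd p - fst p0 * snd p0\<bar> < r / L" using e(2) by (simp add: dist_real_def)
      have "dist (E p0 x) (E p x) < r" if "x \<in> Xset" for x
      proof -
        have "dist (E p0 x) (E p x) \<le> \<bar>lam x * fst p0 * snd p0 - lam x * fst p * snd p\<bar>"
          using that exp_i_lipschitz[of "lam x * fst p0 * snd p0" "lam x * fst p * snd p"] unfolding E_def by (simp add: dist_norm)
        also have "\<dots> = \<bar>lam x\<bar> * \<bar>fst p * snd p - fst p0 * snd p0\<bar>"
          by (simp add: abs_mult[symmetric] algebra_simps)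
        also have "\<dots> \<le> L * \<bar>fst p * snd p - fst p0 * snd p0\<bar>"
          using L(2)[OF that] by (intro mult_right_mono) auto
        also have "\<dots> < L * (r / L)" using d L(1) by (intro mult_strict_left_mono) auto
        also have "\<dots> = r" using L(1) by simp
        finally show ?thesis .
      qed
      then show "p \<in> E -` U" using r(2)[OF EC] by auto
    qed
    then show "\<exists>e>0. \<forall>p. dist p p0 < e \<longrightarrow> p \<in> E -` U" using e(1) by blast
  qed
  then show "open ((\<lambda>p. restrict (\<lambda>x. exp (\<i> * of_real (lam x * fst p * snd p))) Xset) -` U)"
    unfolding E_def .
qed



lemma Re_exp_powi: "Re (exp (\<i> * of_real t) powi (-b)) = cos (real_of_int b * t)"
proof -
  have "exp (\<i> * of_real t) powi (-b) = exp (of_int (-b) * (\<i> * of_real t))" by (rule exp_power_int)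
  also have "of_int (-b) * (\<i> * of_real t) = \<i> * of_real (- (real_of_int b * t))" by simp
  finally show ?thesis by (simp add: Re_exp)
qed

lemma fw_central_hom:
  assumes "cmod z1 = 1" "cmod w1 = 1" "cmod z2 = 1" "cmod w2 = 1"
  shows "fw \<theta> a b (0, 0, z1 * z2, w1 * w2) = fw \<theta> a b (0, 0, z1, w1) * fw \<theta> a b (0, 0, z2, w2)"
  using assms by (simp add: fw_def Gcar_def norm_mult power_int_mult_distrib)

lemma coh_value:
  fixes a b :: int and \<theta> t :: real and w :: "real \<times> real \<Rightarrow> real \<times> real \<Rightarrow> real \<Rightarrow> complex"
    and F :: "real \<times> real \<times> complex \<times> complex \<Rightarrow> real \<Rightarrow> complex"
  assumes irr: "\<theta> \<notin> \<rat>"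
    and wcoc: "\<And>r s t. w r s x * w (r + s) t x = w r (s + t) x * w s t x"
    and wunit: "\<And>s t. cmod (w s t x) = 1"
    and wsym: "\<And>s t. w s t x = w t s x"
    and Fmeas: "(\<lambda>g. F g x) \<in> borel_measurable GM"
    and Funit: "\<forall>g\<in>Gcar. cmod (F g x) = 1"
    and coh: "\<forall>g\<in>Gcar. \<forall>h\<in>Gcar. exp (\<i> * of_real ((a + \<theta> * b) * fst g * fst (snd h))) =
        w (Gab_quot g) (Gab_quot h) x * (F g x * F h x * inverse (F (Gmult \<theta> g h) x))"
  shows "w (0, 0) (0, 0) x * F (0, 0, 1, exp (\<i> * of_real t)) x = exp (\<i> * of_real t) powi (-b)"
proof -
  define k where "k = w (0, 0) (0, 0) x"
  define H where "H g = F g x" for g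
  have k0: "k \<noteq> 0" using wunit[of "(0,0)" "(0,0)"] by (auto simp: k_def)
  have H0: "H g \<noteq> 0" if "g \<in> Gcar" for g using Funit that by (auto simp: H_def)
  have wk: "w s (0, 0) x = k" for s
  proof -
    have "w s (0,0) x * w s (0,0) x = w s (0,0) x * k"
      using wcoc[of s "(0,0)" "(0,0)"] by (simp add: k_def zero_prod_def[symmetric])
    moreover have "w s (0,0) x \<noteq> 0" using wunit[of s "(0,0)"] by auto
    ultimately show ?thesis by simp
  qed
  have central: "H (Gmult \<theta> g (0, 0, z, z')) = k * H g * H (0, 0, z, z')"
    if g: "g \<in> Gcar" and zz: "cmod z = 1" "cmod z' = 1" for g z z'
  proof -
    have pG: "(0::real, 0::real, z, z') \<in> Gcar" using zz by (simp add: Gcar_def)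
    have "exp (\<i> * of_real ((a + \<theta> * b) * fst g * fst (snd (0::real, 0::real, z, z')))) =
        w (Gab_quot g) (Gab_quot (0::real, 0::real, z, z')) x * (H g * H (0, 0, z, z') * inverse (H (Gmult \<theta> g (0, 0, z, z'))))"
      using coh g pG unfolding H_def by blast
    then have "1 = k * (H g * H (0, 0, z, z') * inverse (H (Gmult \<theta> g (0, 0, z, z'))))"
      by (simp add: Gab_quot_def wk)
    moreover have "H (Gmult \<theta> g (0, 0, z, z')) \<noteq> 0" using H0 Gmult_in[OF g pG] by blast
    ultimately show ?thesis by (simp add: field_simps)
  qed
  define ps where "ps p = k * H p / fw \<theta> a b p" for p
  have fwu: "\<forall>g\<in>Gcar. cmod (fw \<theta> a b g) = 1" and fwm: "fw \<theta> a b \<in> borel_measurable GM"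
    using fw_C1[of \<theta> a b] by (auto simp: C1_def)
  have fw0: "fw \<theta> a b g \<noteq> 0" if "g \<in> Gcar" for g using fwu that by fastforce
  have psm: "ps \<in> borel_measurable GM" unfolding ps_def H_def using Fmeas fwm by measurable
  have psu: "\<forall>g\<in>Gcar. cmod (ps g) = 1"
    using Funit fwu wunit[of "(0,0)" "(0,0)"] by (simp add: ps_def H_def k_def norm_mult norm_divide)
  have psh: "ps (0, 0, z1 * z2, w1 * w2) = ps (0, 0, z1, w1) * ps (0, 0, z2, w2)"
    if u: "cmod z1 = 1" "cmod w1 = 1" "cmod z2 = 1" "cmod w2 = 1" for z1 w1 z2 w2
  proof -
    have p1: "(0::real, 0::real, z1, w1) \<in> Gcar" and p2: "(0::real, 0::real, z2, w2) \<in> Gcar"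
      using u by (auto simp: Gcar_def)
    have "H (0, 0, z1 * z2, w1 * w2) = k * H (0, 0, z1, w1) * H (0, 0, z2, w2)"
      using central[OF p1 u(3,4)] by (simp add: Gmult_central)
    moreover have "fw \<theta> a b (0, 0, z1 * z2, w1 * w2) = fw \<theta> a b (0, 0, z1, w1) * fw \<theta> a b (0, 0, z2, w2)"
      by (rule fw_central_hom[OF u])
    ultimately show ?thesis using fw0[OF p1] fw0[OF p2] by (simp add: ps_def field_simps)
  qed
  have psl: "ps (0, 0, exp (\<i> * of_real r), exp (\<i> * of_real (\<theta> * r))) = 1" for r :: real
  proof -
    define g where "g = (r, 0::real, 1::complex, 1::complex)"
    define h where "h = (0::real, 1::real, 1::complex, 1::complex)"
    define c where "c = (0::real, 0::real, exp (\<i> * of_real r), exp (\<i> * of_real (\<theta> * r)))"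
    have gG: "g \<in> Gcar" and hG: "h \<in> Gcar" and cG: "c \<in> Gcar"
      by (auto simp: g_def h_def c_def Gcar_def)
    have hgG: "Gmult \<theta> h g \<in> Gcar" using Gmult_in[OF hG gG] .
    have ghc: "Gmult \<theta> g h = Gmult \<theta> (Gmult \<theta> h g) (0, 0, exp (\<i> * of_real r), exp (\<i> * of_real (\<theta> * r)))"
      by (simp add: Gmult_def g_def h_def)
    have Hgh: "H (Gmult \<theta> g h) = k * H (Gmult \<theta> h g) * H c"
      unfolding ghc c_def by (rule central[OF hgG]) auto
    define W where "W = w (Gab_quot g) (Gab_quot h) x"
    have W': "w (Gab_quot h) (Gab_quot g) x = W" unfolding W_def by (rule wsym)
    have e1: "exp (\<i> * of_real ((a + \<theta> * b) * r)) = W * (H g * H h * inverse (H (Gmult \<theta> g h)))"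
      using coh[rule_format, OF gG hG] unfolding W_def H_def by (simp add: g_def h_def)
    have e2: "1 = W * (H h * H g * inverse (H (Gmult \<theta> h g)))"
      using coh[rule_format, OF hG gG] W' unfolding H_def by (simp add: g_def h_def)
    have n1: "H (Gmult \<theta> g h) \<noteq> 0" using H0 Gmult_in[OF gG hG] by blast
    have n2: "H (Gmult \<theta> h g) \<noteq> 0" using H0 hgG by blast
    have nc: "H c \<noteq> 0" using H0 cG by blast
    have ng: "H g \<noteq> 0" "H h \<noteq> 0" using H0 gG hG by blast+
    from e1 e2 have "exp (\<i> * of_real ((a + \<theta> * b) * r)) * H (Gmult \<theta> g h) = H (Gmult \<theta> h g)"
      using n1 n2 by (simp add: field_simps)
    then have "exp (\<i> * of_real ((a + \<theta> * b) * r)) * (k * H c) = 1"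
      using Hgh n2 by (simp add: field_simps)
    moreover have "fw \<theta> a b c * exp (\<i> * of_real ((a + \<theta> * b) * r)) = 1"
    proof -
      have "fw \<theta> a b c = exp (of_int (-a) * (\<i> * of_real r)) * exp (of_int (-b) * (\<i> * of_real (\<theta> * r)))"
        using cG by (simp add: fw_def c_def exp_power_int)
      then show ?thesis by (simp add: exp_add[symmetric] algebra_simps)
    qed
    ultimately have "k * H c = fw \<theta> a b c" by (metis mult.commute mult.left_commute mult_1_right)
    then show ?thesis using fw0[OF cG] unfolding c_def[symmetric] by (simp add: ps_def)
  qed
  have "ps (0, 0, 1, exp (\<i> * of_real t)) = 1"
    by (rule homC_trivial[OF irr psm psu psh psl])
  moreover have g0: "(0::real, 0::real, 1::complex, exp (\<i> * of_real t)) \<in> Gcar" by (simp add: Gcar_def)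
  ultimately have "k * H (0, 0, 1, exp (\<i> * of_real t)) = fw \<theta> a b (0, 0, 1, exp (\<i> * of_real t))"
    using fw0[OF g0] by (simp add: ps_def)
  then show ?thesis using g0 by (simp add: k_def H_def fw_def)
qed



lemma Xset_inv: "1 / real (Suc n) \<in> Xset"
  unfolding Xset_def by (auto intro!: exI[of _ "Suc n"])

lemma zero_in_Xset: "0 \<in> Xset" unfolding Xset_def by auto

lemma irr_unique:
  fixes a b a' b' :: int and \<theta> :: real
  assumes irr: "\<theta> \<notin> \<rat>" and eq: "of_int a + \<theta> * of_int b = of_int a' + \<theta> * of_int b'"
  shows "b = b'"
proof (rule ccontr)
  assume "b \<noteq> b'"
  then have "\<theta> = (a' - a) / (b - b')" using eq by (auto simp: field_simps)
  then have "\<theta> \<in> \<rat>" by simp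
  then show False using irr by simp
qed

lemma pair_meas:
  fixes \<phi> \<psi> :: "'a \<Rightarrow> real"
  assumes "\<phi> \<in> borel_measurable M" "\<psi> \<in> borel_measurable M"
  shows "(\<lambda>p. (\<phi> (fst p), \<psi> (snd p))) \<in> borel_measurable (M \<Otimes>\<^sub>M M)"
  by (intro borel_measurable_Pair measurable_compose[OF measurable_fst assms(1)]
      measurable_compose[OF measurable_snd assms(2)])

lemma Z2_v:
  fixes lam :: "real \<Rightarrow> real" and v :: "(real \<times> real) \<Rightarrow> (real \<times> real) \<Rightarrow> real \<Rightarrow> complex"
  assumes cont: "continuous_on Xset lam"
    and v_eq: "\<And>s t x. v s t x = exp (\<i> * of_real (lam x * fst s * snd t))"
  shows "v \<in> Z2 borel (+) Xset"
proof -
  have E: "(\<lambda>p::real \<times> real. restrict (\<lambda>x. exp (\<i> * of_real (lam x * fst p * snd p))) Xset)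
          \<in> measurable borel (CXT_M Xset)" by (rule E_measurable[OF cont])
  have inner: "(\<lambda>(s::real \<times> real, t::real \<times> real). (fst s, snd t)) \<in> measurable (borel \<Otimes>\<^sub>M borel) (borel :: (real \<times> real) measure)"
    unfolding case_prod_unfold
    by (rule pair_meas[where \<phi>=fst and \<psi>=snd]) (intro borel_measurable_continuous_onI continuous_intros)+
  have eq: "(\<lambda>(s, t). restrict (v s t) Xset) =
      (\<lambda>p::real \<times> real. restrict (\<lambda>x. exp (\<i> * of_real (lam x * fst p * snd p))) Xset) \<circ> (\<lambda>(s, t). (fst s, snd t))"
    by (auto simp: v_eq fun_eq_iff)
  have m: "(\<lambda>(s, t). restrict (v s t) Xset) \<in> measurable (borel \<Otimes>\<^sub>M borel) (CXT_M Xset)"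
    unfolding eq by (rule measurable_comp[OF inner E])
  have c: "v r s x * v (r + s) t x = v r (s + t) x * v s t x" for r s t :: "real \<times> real" and x
    by (simp add: v_eq exp_add[symmetric] algebra_simps)
  show ?thesis unfolding Z2_def using m c by auto
qed

lemma not_pt_v:
  fixes lam :: "real \<Rightarrow> real" and v :: "(real \<times> real) \<Rightarrow> (real \<times> real) \<Rightarrow> real \<Rightarrow> complex"
  assumes nz: "\<forall>n::nat. n \<ge> 1 \<longrightarrow> lam (1 / real n) \<noteq> 0"
    and v_eq: "\<And>s t x. v s t x = exp (\<i> * of_real (lam x * fst s * snd t))"
  shows "\<not> pointwise_trivial borel (+) Xset v"
proof
  assume "pointwise_trivial borel (+) Xset v"
  moreover have X1: "1 \<in> Xset" using Xset_inv[of 0] by simp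
  ultimately obtain f where f: "\<forall>s t. v s t 1 = cobdry (+) f s t"
    unfolding pointwise_trivial_def is_cobdry_def by fastforce
  define l where "l = lam 1"
  have l0: "l \<noteq> 0" using nz[rule_format, of 1] by (simp add: l_def)
  define s0 where "s0 = (1::real, 0::real)"
  define t0 where "t0 = (0::real, pi / l)"
  have "v s0 t0 1 = exp (\<i> * of_real pi)" using l0 by (simp add: v_eq s0_def t0_def l_def)
  also have "\<dots> = -1" by simp
  finally have a: "v s0 t0 1 = -1" .
  have b: "v t0 s0 1 = 1" by (simp add: v_eq s0_def t0_def)
  have "cobdry (+) f s0 t0 = cobdry (+) f t0 s0" by (simp add: cobdry_def add.commute mult.commute)
  moreover have "v s0 t0 1 = cobdry (+) f s0 t0" "v t0 s0 1 = cobdry (+) f t0 s0" using f by blast+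
  ultimately have "v s0 t0 1 = v t0 s0 1" by simp
  then show False using a b by simp
qed



lemma Gab_quot_mult: "Gab_quot (Gmult \<theta> g h) = Gab_quot g + Gab_quot h"
  by (cases g, cases h) (simp add: Gab_quot_def Gmult_def)

lemma GM_fst_meas: "(\<lambda>g::real \<times> real \<times> complex \<times> complex. fst g) \<in> borel_measurable GM"
  unfolding GM_def by (rule measurable_restrict_space1) (intro borel_measurable_continuous_onI continuous_intros)

lemma GM_fst_snd_meas: "(\<lambda>g::real \<times> real \<times> complex \<times> complex. fst (snd g)) \<in> borel_measurable GM"
  unfolding GM_def by (rule measurable_restrict_space1) (intro borel_measurable_continuous_onI continuous_intros)

lemma Z2_infl:
  fixes lam :: "real \<Rightarrow> real" and v :: "(real \<times> real) \<Rightarrow> (real \<times> real) \<Rightarrow> real \<Rightarrow> complex"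
  assumes cont: "continuous_on Xset lam"
    and v_eq: "\<And>s t x. v s t x = exp (\<i> * of_real (lam x * fst s * snd t))"
  shows "infl v \<in> Z2 GM (Gmult \<theta>) Xset"
proof -
  have infl_eq: "infl v g h x = exp (\<i> * of_real (lam x * fst g * fst (snd h)))" for g h x
    by (simp add: infl_def Gab_quot_def v_eq)
  have E: "(\<lambda>p::real \<times> real. restrict (\<lambda>x. exp (\<i> * of_real (lam x * fst p * snd p))) Xset)
          \<in> measurable borel (CXT_M Xset)" by (rule E_measurable[OF cont])
  have inner: "(\<lambda>(g::real \<times> real \<times> complex \<times> complex, h::real \<times> real \<times> complex \<times> complex). (fst g, fst (snd h)))
      \<in> measurable (GM \<Otimes>\<^sub>M GM) (borel :: (real \<times> real) measure)"
    unfolding case_prod_unfold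
    by (rule pair_meas[where \<phi>=fst and \<psi>="\<lambda>h. fst (snd h)", OF GM_fst_meas GM_fst_snd_meas])
  have eq: "(\<lambda>(g, h). restrict (infl v g h) Xset) =
      (\<lambda>p::real \<times> real. restrict (\<lambda>x. exp (\<i> * of_real (lam x * fst p * snd p))) Xset) \<circ>
      (\<lambda>(g::real \<times> real \<times> complex \<times> complex, h::real \<times> real \<times> complex \<times> complex). (fst g, fst (snd h)))"
    by (auto simp: infl_eq fun_eq_iff)
  have m: "(\<lambda>(g, h). restrict (infl v g h) Xset) \<in> measurable (GM \<Otimes>\<^sub>M GM) (CXT_M Xset)"
    unfolding eq by (rule measurable_comp[OF inner E])
  have c: "infl v r s x * infl v (Gmult \<theta> r s) t x = infl v r (Gmult \<theta> s t) x * infl v s t x" for r s t x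
    unfolding infl_def Gab_quot_mult by (simp add: v_eq exp_add[symmetric] algebra_simps)
  show ?thesis unfolding Z2_def using m c by auto
qed

lemma pt_infl:
  fixes lam :: "real \<Rightarrow> real" and v :: "(real \<times> real) \<Rightarrow> (real \<times> real) \<Rightarrow> real \<Rightarrow> complex"
  assumes range: "\<forall>x\<in>Xset. \<exists>a b :: int. lam x = of_int a + \<theta> * of_int b"
    and v_eq: "\<And>s t x. v s t x = exp (\<i> * of_real (lam x * fst s * snd t))"
  shows "pointwise_trivial GM (Gmult \<theta>) Xset (infl v)"
  unfolding pointwise_trivial_def is_cobdry_def
proof
  fix x assume "x \<in> Xset"
  then obtain a b :: int where ab: "lam x = of_int a + \<theta> * of_int b" using range by blast
  have "\<forall>s\<in>space GM. \<forall>t\<in>space GM. infl v s t x = cobdry (Gmult \<theta>) (fw \<theta> a b) s t"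
    using fw_cobdry by (simp add: infl_def Gab_quot_def v_eq ab)
  then show "\<exists>f\<in>C1 GM. \<forall>s\<in>space GM. \<forall>t\<in>space GM. infl v s t x = cobdry (Gmult \<theta>) f s t"
    using fw_C1 by blast
qed



lemma bseq_facts:
  fixes lam :: "real \<Rightarrow> real" and A B :: "real \<Rightarrow> int"
  assumes irr: "\<theta> \<notin> \<rat>" and cont: "continuous_on Xset lam"
    and zero: "lam 0 = 0"
    and nz: "\<forall>n::nat. n \<ge> 1 \<longrightarrow> lam (1 / real n) \<noteq> 0"
    and AB: "\<And>x. x \<in> Xset \<Longrightarrow> lam x = of_int (A x) + \<theta> * of_int (B x)"
  shows "eventually (\<lambda>n. B (1 / real (Suc n)) \<noteq> 0) sequentially" "B 0 = 0"
proof -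
  have "lam 0 = of_int 0 + \<theta> * of_int 0" using zero by simp
  then show "B 0 = 0" using irr_unique[OF irr] AB[OF zero_in_Xset] by metis
next
  have lim: "(\<lambda>n. 1 / real (Suc n)) \<longlonglongrightarrow> 0"
    using LIMSEQ_inverse_real_of_nat by (simp add: inverse_eq_divide)
  have "(\<lambda>n. lam (1 / real (Suc n))) \<longlonglongrightarrow> lam 0"
    by (rule continuous_on_tendsto_compose[OF cont lim zero_in_Xset]) (intro always_eventually allI Xset_inv)
  then have "(\<lambda>n. lam (1 / real (Suc n))) \<longlonglongrightarrow> 0" using zero by simp
  then obtain no where no: "\<And>n. n \<ge> no \<Longrightarrow> \<bar>lam (1 / real (Suc n))\<bar> < 1"
    unfolding LIMSEQ_iff by (metis norm_conv_dist dist_0_norm real_norm_def zero_less_one diff_zero)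
  show "eventually (\<lambda>n. B (1 / real (Suc n)) \<noteq> 0) sequentially"
    unfolding eventually_sequentially
  proof (intro exI allI impI)
    fix n assume "n \<ge> no"
    then have l1: "\<bar>lam (1 / real (Suc n))\<bar> < 1" by (rule no)
    have ln: "lam (1 / real (Suc n)) \<noteq> 0" using nz[rule_format, of "Suc n"] by simp
    show "B (1 / real (Suc n)) \<noteq> 0"
    proof
      assume "B (1 / real (Suc n)) = 0"
      then have la: "lam (1 / real (Suc n)) = of_int (A (1 / real (Suc n)))" using AB[OF Xset_inv] by simp
      have "A (1 / real (Suc n)) = 0"
      proof (rule ccontr)
        assume "A (1 / real (Suc n)) \<noteq> 0"
        then have "\<bar>A (1 / real (Suc n))\<bar> \<ge> 1" by linarith
        then have "\<bar>real_of_int (A (1 / real (Suc n)))\<bar> \<ge> 1" by (metis of_int_abs of_int_1_le_iff)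
        then show False using l1 la by simp
      qed
      then show False using la ln by simp
    qed
  qed
qed

lemma re_bound: "\<bar>cos (real_of_int b * t) - 1\<bar> \<le> cmod (exp (\<i> * of_real t) powi (-b) - 1)"
proof -
  have "\<bar>Re (exp (\<i> * of_real t) powi (-b) - 1)\<bar> \<le> cmod (exp (\<i> * of_real t) powi (-b) - 1)"
    by (rule abs_Re_le_cmod)
  then show ?thesis by (simp add: Re_exp_powi)
qed

lemma f0_C1: "restrict (\<lambda>_. 1) Gcar \<in> C1 GM"
proof -
  have "restrict (\<lambda>_. 1::complex) Gcar \<in> borel_measurable GM"
    by (rule measurable_cong[THEN iffD2, of _ _ "\<lambda>_. 1"]) auto
  then show ?thesis by (simp add: C1_def)
qed

lemma not_open:
  fixes lam :: "real \<Rightarrow> real" and A B :: "real \<Rightarrow> int" and v :: "(real \<times> real) \<Rightarrow> (real \<times> real) \<Rightarrow> real \<Rightarrow> complex"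
  assumes irr: "\<theta> \<notin> \<rat>"
    and zero: "lam 0 = 0"
    and AB: "\<And>x. x \<in> Xset \<Longrightarrow> lam x = of_int (A x) + \<theta> * of_int (B x)"
    and v_eq: "\<And>s t x. v s t x = exp (\<i> * of_real (lam x * fst s * snd t))"
    and t: "\<not> ((\<lambda>n. cos (real_of_int (B (1 / real (Suc n))) * t)) \<longlonglongrightarrow> 1)"
  shows "\<not> open_map (top_of_set (Zspace GM (Gmult \<theta>) Xset (infl v))) (top_of_set Xset) snd"
proof
  assume om: "open_map (top_of_set (Zspace GM (Gmult \<theta>) Xset (infl v))) (top_of_set Xset) snd"
  have infl_eq: "infl v g h x = exp (\<i> * of_real (lam x * fst g * fst (snd h)))" for g h x
    by (simp add: infl_def Gab_quot_def v_eq)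
  obtain \<epsilon> where \<epsilon>: "\<epsilon> > 0" "\<And>N. \<exists>n\<ge>N. \<not> \<bar>cos (real_of_int (B (1 / real (Suc n))) * t) - 1\<bar> < \<epsilon>"
    using t unfolding LIMSEQ_iff by (auto simp: real_norm_def)
  define g0 where "g0 = (0::real, 0::real, 1::complex, exp (\<i> * of_real t))"
  have g0G: "g0 \<in> Gcar" by (simp add: g0_def Gcar_def)
  define Z where "Z = Zspace GM (Gmult \<theta>) Xset (infl v)"
  define U where "U = Z \<inter> {p. cmod (fst p g0 - 1) < \<epsilon>}"
  have "continuous_on UNIV (\<lambda>p::((real \<times> real \<times> complex \<times> complex) \<Rightarrow> complex) \<times> real. fst p g0)"
    by (rule continuous_on_compose2[OF continuous_on_product_coordinates continuous_on_fst[OF continuous_on_id]]) auto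
  then have "open {p::((real \<times> real \<times> complex \<times> complex) \<Rightarrow> complex) \<times> real. cmod (fst p g0 - 1) < \<epsilon>}"
    by (intro open_Collect_less continuous_intros)
  then have "openin (top_of_set Z) U" unfolding U_def by (rule openin_open_Int)
  then have op: "openin (top_of_set Xset) (snd ` U)" using om unfolding open_map_def Z_def by blast
  define f0 where "f0 = restrict (\<lambda>_. 1::complex) Gcar"
  have "(f0, 0) \<in> U"
  proof -
    have "\<forall>s\<in>space GM. \<forall>t\<in>space GM. cobdry (Gmult \<theta>) f0 s t = infl v s t 0"
      using Gmult_in by (simp add: f0_def cobdry_def infl_eq zero)
    then have "(f0, 0) \<in> Z" using f0_C1 zero_in_Xset by (simp add: Z_def Zspace_def f0_def)
    then show ?thesis using g0G \<epsilon>(1) by (simp add: U_def f0_def)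
  qed
  then have "0 \<in> snd ` U" by force
  then obtain e where e: "e > 0" "\<And>x'. x' \<in> Xset \<Longrightarrow> dist x' 0 < e \<Longrightarrow> x' \<in> snd ` U"
    using op unfolding openin_euclidean_subtopology_iff by blast
  obtain N where N: "inverse (real (Suc N)) < e" using reals_Archimedean e(1) by blast
  obtain n where n: "n \<ge> N" "\<not> \<bar>cos (real_of_int (B (1 / real (Suc n))) * t) - 1\<bar> < \<epsilon>"
    using \<epsilon>(2) by blast
  define x' where "x' = 1 / real (Suc n)"
  have x'X: "x' \<in> Xset" unfolding x'_def by (rule Xset_inv)
  have "x' \<le> inverse (real (Suc N))" unfolding x'_def using n(1)
    by (simp add: inverse_eq_divide frac_le)
  then have "dist x' 0 < e" using N by (simp add: x'_def)
  then have "x' \<in> snd ` U" using e(2) x'X by blast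
  then obtain f where fU: "(f, x') \<in> U" by force
  then have fC: "f \<in> C1 GM" and cob: "\<forall>s\<in>Gcar. \<forall>t\<in>Gcar. cobdry (Gmult \<theta>) f s t = infl v s t x'"
    and small: "cmod (f g0 - 1) < \<epsilon>"
    by (auto simp: U_def Z_def Zspace_def)
  have cob': "\<forall>g\<in>Gcar. \<forall>h\<in>Gcar. cobdry (Gmult \<theta>) f g h =
      exp (\<i> * of_real ((of_int (A x') + \<theta> * of_int (B x')) * fst g * fst (snd h)))"
    using cob AB[OF x'X] by (simp add: infl_eq)
  have "f g0 = exp (\<i> * of_real t) powi (- B x')"
    unfolding g0_def by (rule solution_value[OF irr fC cob'])
  then have "\<bar>cos (real_of_int (B x') * t) - 1\<bar> < \<epsilon>" using small re_bound[of "B x'" t] by simp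
  then show False using n(2) by (simp add: x'_def)
qed



lemma eval_meas:
  assumes "x \<in> X"
  shows "(\<lambda>f. f x) \<in> borel_measurable (CXT_M X)"
proof (rule borel_measurableI)
  fix S :: "complex set" assume S: "open S"
  have "cxt_open X ((\<lambda>f. f x) -` S \<inter> CXT X)"
    unfolding cxt_open_def
  proof (intro conjI ballI)
    fix f assume f: "f \<in> (\<lambda>f. f x) -` S \<inter> CXT X"
    then have "f x \<in> S" by simp
    then obtain r where r: "r > 0" "ball (f x) r \<subseteq> S" using S open_contains_ball by blast
    show "\<exists>r>0. \<forall>g\<in>CXT X. (\<forall>y\<in>X. dist (f y) (g y) < r) \<longrightarrow> g \<in> (\<lambda>f. f x) -` S \<inter> CXT X"
      using r assms by (intro exI[of _ r]) (auto simp: subset_eq)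
  qed auto
  then show "(\<lambda>f. f x) -` S \<inter> space (CXT_M X) \<in> sets (CXT_M X)"
    by (simp add: sets_CXT_M sigma_sets.Basic)
qed

lemma CXT_unit: "f \<in> CXT X \<Longrightarrow> x \<in> X \<Longrightarrow> cmod (f x) = 1"
  by (simp add: CXT_def)

lemma CXT_cont: "restrict f X \<in> CXT X \<Longrightarrow> continuous_on X f"
  unfolding CXT_def by (auto elim: continuous_on_eq)

lemma not_coh:
  fixes lam :: "real \<Rightarrow> real" and A B :: "real \<Rightarrow> int" and v :: "(real \<times> real) \<Rightarrow> (real \<times> real) \<Rightarrow> real \<Rightarrow> complex"
  assumes irr: "\<theta> \<notin> \<rat>"
    and AB: "\<And>x. x \<in> Xset \<Longrightarrow> lam x = of_int (A x) + \<theta> * of_int (B x)"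
    and v_eq: "\<And>s t x. v s t x = exp (\<i> * of_real (lam x * fst s * snd t))"
    and B0: "B 0 = 0"
    and t: "\<not> ((\<lambda>n. cos (real_of_int (B (1 / real (Suc n))) * t)) \<longlonglongrightarrow> 1)"
  shows "\<not> (\<exists>w \<in> Z2 borel (+) Xset. pointwise_trivial borel (+) Xset w
            \<and> cohomologous GM (Gmult \<theta>) Xset (infl v) (infl w))"
proof
  assume "\<exists>w \<in> Z2 borel (+) Xset. pointwise_trivial borel (+) Xset w
            \<and> cohomologous GM (Gmult \<theta>) Xset (infl v) (infl w)"
  then obtain w F where wZ: "w \<in> Z2 borel (+) Xset" and wpt: "pointwise_trivial borel (+) Xset w"
    and Fm: "(\<lambda>s. restrict (F s) Xset) \<in> measurable GM (CXT_M Xset)"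
    and Fc: "\<forall>s\<in>Gcar. \<forall>t\<in>Gcar. \<forall>x\<in>Xset.
        infl v s t x = infl w s t x * (F s x * F t x * inverse (F (Gmult \<theta> s t) x))"
    unfolding cohomologous_def by auto
  have wm: "(\<lambda>(s, t). restrict (w s t) Xset) \<in> measurable (borel \<Otimes>\<^sub>M borel) (CXT_M Xset)"
    and wc: "\<And>r s t x. x \<in> Xset \<Longrightarrow> w r s x * w (r + s) t x = w r (s + t) x * w s t x"
    using wZ unfolding Z2_def by auto
  have wC: "restrict (w s t) Xset \<in> CXT Xset" for s t
    using measurable_space[OF wm, of "(s, t)"] by (simp add: space_pair_measure)
  have FC: "restrict (F g) Xset \<in> CXT Xset" if "g \<in> Gcar" for g
    using measurable_space[OF Fm, of g] that by simp
  have wsym: "w s t x = w t s x" if xX: "x \<in> Xset" for s t x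
  proof -
    obtain f where f: "\<forall>s t. w s t x = cobdry (+) f s t"
      using wpt xX unfolding pointwise_trivial_def is_cobdry_def by fastforce
    have "cobdry (+) f s t = cobdry (+) f t s" by (simp add: cobdry_def add.commute mult.commute)
    then show ?thesis using f by metis
  qed
  have infl_eq: "infl v g h x = exp (\<i> * of_real (lam x * fst g * fst (snd h)))" for g h x
    by (simp add: infl_def Gab_quot_def v_eq)
  define g0 where "g0 = (0::real, 0::real, 1::complex, exp (\<i> * of_real t))"
  have g0G: "g0 \<in> Gcar" by (simp add: g0_def Gcar_def)
  have val: "w (0, 0) (0, 0) x * F g0 x = exp (\<i> * of_real t) powi (- B x)" if x: "x \<in> Xset" for x
  proof -
    have h1: "\<And>r s t. w r s x * w (r + s) t x = w r (s + t) x * w s t x" using wc x by blast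
    have h2: "\<And>s t. cmod (w s t x) = 1" using wC x by (auto simp: CXT_def)
    have h3: "\<And>s t. w s t x = w t s x" using wsym x by blast
    have "(\<lambda>g. restrict (F g) Xset x) \<in> borel_measurable GM"
      using measurable_comp[OF Fm eval_meas[OF x]] by (simp add: o_def)
    then have h4: "(\<lambda>g. F g x) \<in> borel_measurable GM" using x by simp
    have h5: "\<forall>g\<in>Gcar. cmod (F g x) = 1" using FC x by (auto simp: CXT_def)
    have h6: "\<forall>g\<in>Gcar. \<forall>h\<in>Gcar. exp (\<i> * of_real ((of_int (A x) + \<theta> * of_int (B x)) * fst g * fst (snd h))) =
        w (Gab_quot g) (Gab_quot h) x * (F g x * F h x * inverse (F (Gmult \<theta> g h) x))"
    proof (intro ballI)
      fix g h assume gh: "g \<in> Gcar" "h \<in> Gcar"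
      have "infl v g h x = infl w g h x * (F g x * F h x * inverse (F (Gmult \<theta> g h) x))"
        using Fc gh x by blast
      then show "exp (\<i> * of_real ((of_int (A x) + \<theta> * of_int (B x)) * fst g * fst (snd h))) =
        w (Gab_quot g) (Gab_quot h) x * (F g x * F h x * inverse (F (Gmult \<theta> g h) x))"
        unfolding infl_eq AB[OF x] by (simp add: infl_def)
    qed
    show ?thesis unfolding g0_def
      by (rule coh_value[where w=w and F=F and x=x and a="A x" and b="B x" and \<theta>=\<theta>, OF irr h1 h2 h3 h4 h5 h6])
  qed
  have cont: "continuous_on Xset (\<lambda>x. w (0, 0) (0, 0) x * F g0 x)"
    using CXT_cont[OF wC] CXT_cont[OF FC[OF g0G]] by (intro continuous_intros)
  have lim: "(\<lambda>n. 1 / real (Suc n)) \<longlonglongrightarrow> 0"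
    using LIMSEQ_inverse_real_of_nat by (simp add: inverse_eq_divide)
  have "(\<lambda>n. w (0, 0) (0, 0) (1 / real (Suc n)) * F g0 (1 / real (Suc n))) \<longlonglongrightarrow> w (0, 0) (0, 0) 0 * F g0 0"
    by (rule continuous_on_tendsto_compose[OF cont lim zero_in_Xset]) (intro always_eventually allI Xset_inv)
  then have "(\<lambda>n. exp (\<i> * of_real t) powi (- B (1 / real (Suc n)))) \<longlonglongrightarrow> exp (\<i> * of_real t) powi (- B 0)"
    using val[OF zero_in_Xset] val[OF Xset_inv] by simp
  then have "(\<lambda>n. Re (exp (\<i> * of_real t) powi (- B (1 / real (Suc n))))) \<longlonglongrightarrow> Re (exp (\<i> * of_real t) powi (- B 0))"
    by (rule tendsto_Re)
  then have "(\<lambda>n. cos (real_of_int (B (1 / real (Suc n))) * t)) \<longlonglongrightarrow> 1"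
    using B0 by (simp only: Re_exp_powi) simp
  then show False using t by blast
qed



theorem mainTheorem5:
  fixes \<theta> :: real and lam :: "real \<Rightarrow> real"
    and v :: "(real \<times> real) \<Rightarrow> (real \<times> real) \<Rightarrow> real \<Rightarrow> complex"
  assumes irr: "\<theta> \<notin> \<rat>"
    and cont: "continuous_on Xset lam"
    and range: "\<forall>x\<in>Xset. \<exists>a b :: int. lam x = of_int a + \<theta> * of_int b"
    and zero: "lam 0 = 0"
    and nz: "\<forall>n::nat. n \<ge> 1 \<longrightarrow> lam (1 / real n) \<noteq> 0"
    and vdef: "v = (\<lambda>(s1,t1) (s2,t2) x. exp (\<i> * of_real (lam x * s1 * t2)))"
  shows "v \<in> Z2 borel (+) Xset
    \<and> \<not> pointwise_trivial borel (+) Xset v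
    \<and> infl v \<in> Z2 GM (Gmult \<theta>) Xset
    \<and> pointwise_trivial GM (Gmult \<theta>) Xset (infl v)
    \<and> \<not> open_map (top_of_set (Zspace GM (Gmult \<theta>) Xset (infl v))) (top_of_set Xset) snd
    \<and> \<not> (\<exists>w \<in> Z2 borel (+) Xset. pointwise_trivial borel (+) Xset w
            \<and> cohomologous GM (Gmult \<theta>) Xset (infl v) (infl w))"
proof -
  have v_eq: "\<And>s t x. v s t x = exp (\<i> * of_real (lam x * fst s * snd t))"
    by (simp add: vdef case_prod_unfold)
  obtain A B :: "real \<Rightarrow> int" where AB: "\<And>x. x \<in> Xset \<Longrightarrow> lam x = of_int (A x) + \<theta> * of_int (B x)"
    using range by metis
  have ev: "eventually (\<lambda>n. B (1 / real (Suc n)) \<noteq> 0) sequentially" and B0: "B 0 = 0"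
    using bseq_facts[OF irr cont zero nz AB] by blast+
  obtain t where t: "\<not> ((\<lambda>n. cos (real_of_int (B (1 / real (Suc n))) * t)) \<longlonglongrightarrow> 1)"
    using cos_not_all_tendsto[OF ev] by blast
  show ?thesis
    using Z2_v[OF cont v_eq] not_pt_v[OF nz v_eq] Z2_infl[OF cont v_eq] pt_infl[OF range v_eq]
      not_open[OF irr zero AB v_eq t] not_coh[OF irr AB v_eq B0 t] by blast
qed


end
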